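(* For every positive integer $n$, the matrix $L$ indexed by $P(n)$ defined in the context is invertible.
   Context: Let $\phi$ denote Euler's totient function. For a positive integer $n$ let $P(n)=\{(i,j): j\mid n,\ i\mid j\}$. Let $L$ be the square matrix with rows and columns indexed by $P(n)$ whose entry in row $(i,j)$ and column $(d,c)$ is $L_{(i,j)}^{(d,c)} = \phi(d)\,\frac{n}{\operatorname{lcm}(j,c)}$ if $d\mid i$ and $j\mid \operatorname{lcm}(i,c)$, and $0$ otherwise. *)

theory Defs
  imports "HOL-Number_Theory.Number_Theory"
begin

definition Pset :: "nat \<Rightarrow> (nat \<times> nat) set" where
  "Pset n = {(i, j). j dvd n \<and> i dvd j}"

definition Lmat :: "nat \<Rightarrow> nat \<times> nat \<Rightarrow> nat \<times> nat \<Rightarrow> rat" where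
  "Lmat n = (\<lambda>(i, j) (d, c).
     if d dvd i \<and> j dvd lcm i c
     then of_nat (totient d) * (of_nat n / of_nat (lcm j c))
     else 0)"

definition invertible_on :: "'a set \<Rightarrow> ('a \<Rightarrow> 'a \<Rightarrow> rat) \<Rightarrow> bool" where
  "invertible_on I A \<longleftrightarrow> (\<exists>B :: 'a \<Rightarrow> 'a \<Rightarrow> rat.
     (\<forall>p\<in>I. \<forall>q\<in>I. (\<Sum>r\<in>I. A p r * B r q) = (if p = q then 1 else 0)) \<and>
     (\<forall>p\<in>I. \<forall>q\<in>I. (\<Sum>r\<in>I. B p r * A r q) = (if p = q then 1 else 0)))"

end

theory Submission
  imports Defs
begin

lemma tri_invertible:
  fixes A :: "'a \<Rightarrow> 'a \<Rightarrow> rat" and f :: "'a \<Rightarrow> nat"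
  assumes "finite I"
    and "\<forall>p\<in>I. \<forall>q\<in>I. A p q \<noteq> 0 \<longrightarrow> p = q \<or> f q < f p"
    and "\<forall>p\<in>I. A p p \<noteq> 0"
  shows "invertible_on I A"
  using assms
proof (induction I rule: finite_ranking_induct[where f = f])
  case empty
  then show ?case by (simp add: invertible_on_def)
next
  case (insert m S)
  show ?case
  proof (cases "m \<in> S")
    case True
    then show ?thesis using insert by (simp add: insert_absorb)
  next
    case mS: False
    from insert have "invertible_on S A" by auto
    then obtain C where C1: "\<forall>p\<in>S. \<forall>q\<in>S. (\<Sum>r\<in>S. A p r * C r q) = (if p = q then 1 else 0)"
      and C2: "\<forall>p\<in>S. \<forall>q\<in>S. (\<Sum>r\<in>S. C p r * A r q) = (if p = q then 1 else 0)"
      unfolding invertible_on_def by blast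
    define \<alpha> where "\<alpha> = A m m"
    have a0: "\<alpha> \<noteq> 0" using insert.prems unfolding \<alpha>_def by auto
    have col: "A y m = 0" if "y \<in> S" for y
    proof (rule ccontr)
      assume "A y m \<noteq> 0"
      then have "y = m \<or> f m < f y" using insert.prems that by auto
      then show False using mS that insert.hyps(2)[OF that] by auto
    qed
    define B where "B p q = (if p = m \<and> q = m then 1/\<alpha>
       else if p = m then -(1/\<alpha>) * (\<Sum>r\<in>S. A m r * C r q)
       else if q = m then 0 else C p q)" for p q
    have fin: "finite S" by fact
    have AB: "(\<Sum>r\<in>insert m S. A p r * B r q) = (if p = q then 1 else 0)"
      if p: "p \<in> insert m S" and q: "q \<in> insert m S" for p q
    proof -
      have e: "(\<Sum>r\<in>insert m S. A p r * B r q) = A p m * B m q + (\<Sum>r\<in>S. A p r * B r q)"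
        using fin mS by simp
      have s1: "(\<Sum>r\<in>S. A p r * B r q) = (\<Sum>r\<in>S. A p r * C r q)" if "q \<noteq> m"
        using mS that by (intro sum.cong) (auto simp: B_def)
      have s2: "(\<Sum>r\<in>S. A p r * B r m) = 0"
        using mS by (intro sum.neutral) (auto simp: B_def)
      show ?thesis
      proof (cases "p = m")
        case pm: True
        show ?thesis
        proof (cases "q = m")
          case True
          then show ?thesis using e s2 pm a0 by (simp add: B_def \<alpha>_def)
        next
          case False
          then show ?thesis using e s1[OF False] pm a0 by (simp add: B_def \<alpha>_def)
        qed
      next
        case pS: False
        then have pS': "p \<in> S" using p by auto
        show ?thesis
        proof (cases "q = m")
          case True
          then show ?thesis using e s2 pS col[OF pS'] by simp
        next
          case False
          then have "q \<in> S" using q by auto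
          then show ?thesis using e s1[OF False] C1 pS' col[OF pS'] by simp
        qed
      qed
    qed
    have BA: "(\<Sum>r\<in>insert m S. B p r * A r q) = (if p = q then 1 else 0)"
      if p: "p \<in> insert m S" and q: "q \<in> insert m S" for p q
    proof -
      have e: "(\<Sum>r\<in>insert m S. B p r * A r q) = B p m * A m q + (\<Sum>r\<in>S. B p r * A r q)"
        using fin mS by simp
      have s2: "(\<Sum>r\<in>S. B p r * A r m) = 0"
        by (intro sum.neutral) (auto simp: col)
      show ?thesis
      proof (cases "p = m")
        case pm: True
        show ?thesis
        proof (cases "q = m")
          case True
          then show ?thesis using e s2 pm a0 by (simp add: B_def \<alpha>_def)
        next
          case False
          then have qS: "q \<in> S" using q by auto
          have "(\<Sum>r\<in>S. B m r * A r q) = (\<Sum>r\<in>S. -(1/\<alpha>) * (\<Sum>s\<in>S. A m s * C s r) * A r q)"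
            using mS by (intro sum.cong) (auto simp: B_def)
          also have "\<dots> = -(1/\<alpha>) * (\<Sum>r\<in>S. \<Sum>s\<in>S. A m s * (C s r * A r q))"
            by (simp add: sum_distrib_left sum_distrib_right mult.assoc)
          also have "\<dots> = -(1/\<alpha>) * (\<Sum>s\<in>S. A m s * (\<Sum>r\<in>S. C s r * A r q))"
            by (subst sum.swap) (simp add: sum_distrib_left)
          also have "\<dots> = -(1/\<alpha>) * (\<Sum>s\<in>S. A m s * (if s = q then 1 else 0))"
            using C2 qS by (intro arg_cong[where f = "\<lambda>x. _ * x"] sum.cong) auto
          also have "\<dots> = -(1/\<alpha>) * A m q"
            using qS fin by (simp add: if_distrib cong: if_cong)
          finally show ?thesis using e pm False by (simp add: B_def)
        qed
      next
        case pS: False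
        then have pS': "p \<in> S" using p by auto
        have s1: "(\<Sum>r\<in>S. B p r * A r q) = (\<Sum>r\<in>S. C p r * A r q)"
          using mS pS by (intro sum.cong) (auto simp: B_def)
        show ?thesis
        proof (cases "q = m")
          case True
          then show ?thesis using e s2 pS by (simp add: B_def)
        next
          case False
          then have "q \<in> S" using q by auto
          then show ?thesis using e s1 C2 pS' pS by (simp add: B_def)
        qed
      qed
    qed
    show ?thesis unfolding invertible_on_def using AB BA by blast
  qed
qed

theorem proposition3p3:
  fixes n :: nat
  assumes "n > 0"
  shows "invertible_on (Pset n) (Lmat n)"
proof (rule tri_invertible[where f = "\<lambda>(x, y). x * (n + 1) + (n - y)"])
  have "Pset n \<subseteq> {0..n} \<times> {0..n}"
    using assms by (auto simp: Pset_def) (meson dvd_imp_le dvd_trans)+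
  then show "finite (Pset n)" by (rule finite_subset) auto
next
  show "\<forall>p\<in>Pset n. Lmat n p p \<noteq> 0"
  proof
    fix p assume "p \<in> Pset n"
    then obtain i j where p: "p = (i, j)" "j dvd n" "i dvd j" by (auto simp: Pset_def)
    have "j > 0" using p assms by (auto intro: Nat.gr0I)
    then have "i > 0" using p by (auto intro: Nat.gr0I)
    then show "Lmat n p p \<noteq> 0" using p \<open>j > 0\<close> assms by (simp add: Lmat_def)
  qed
next
  show "\<forall>p\<in>Pset n. \<forall>q\<in>Pset n. Lmat n p q \<noteq> 0 \<longrightarrow> p = q \<or>
      (case q of (x, y) \<Rightarrow> x * (n + 1) + (n - y)) < (case p of (x, y) \<Rightarrow> x * (n + 1) + (n - y))"
  proof (intro ballI impI)
    fix p q assume pP: "p \<in> Pset n" and qP: "q \<in> Pset n" and nz: "Lmat n p q \<noteq> 0"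
    obtain i j where p: "p = (i, j)" "j dvd n" "i dvd j" using pP by (auto simp: Pset_def)
    obtain d c where q: "q = (d, c)" "c dvd n" "d dvd c" using qP by (auto simp: Pset_def)
    have j0: "j > 0" using p assms by (auto intro: Nat.gr0I)
    then have i0: "i > 0" using p by (auto intro: Nat.gr0I)
    have c0: "c > 0" using q assms by (auto intro: Nat.gr0I)
    have cn: "c \<le> n" "j \<le> n" using q p assms by (auto dest: dvd_imp_le)
    from nz have di: "d dvd i" and jl: "j dvd lcm i c" using p q by (auto simp: Lmat_def split: if_splits)
    show "p = q \<or> (case q of (x, y) \<Rightarrow> x * (n + 1) + (n - y)) < (case p of (x, y) \<Rightarrow> x * (n + 1) + (n - y))"
    proof (cases "d = i")
      case True
      then have "lcm i c = c" using q by (simp add: lcm_proj2_iff)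
      then have "j dvd c" using jl by simp
      then have "j \<le> c" using c0 by (simp add: dvd_imp_le)
      then show ?thesis using True p q cn by (cases "j = c") auto
    next
      case False
      then have "d < i" using di i0 by (metis dvd_imp_le le_neq_implies_less)
      then have "d + 1 \<le> i" by simp
      then have "(d + 1) * (n + 1) \<le> i * (n + 1)" by (rule mult_right_mono) simp
      then have "d * (n + 1) + (n - c) < i * (n + 1) + (n - j)" by simp
      then show ?thesis using p q by simp
    qed
  qed
qed

end
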